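(* Let ${\bm{x}}_i^m\in\mathbb{R}^d$ ($m\in[M]$, $i\in[n]$) satisfy $\|{\bm{x}}_i^m\|\le1$ and be linearly separable with maximum margin $\gamma=\max_{\|{\bm{w}}\|=1}\min_{m,i}\langle{\bm{w}},{\bm{x}}_i^m\rangle>0$. Let $\ell(z)=\log(1+e^{-z})$, $F_m({\bm{w}})=\frac1n\sum_i\ell(\langle{\bm{w}},{\bm{x}}_i^m\rangle)$, $F=\frac1M\sum_mF_m$. Run Local GD with any ${\bm{w}}_0$, $\eta>0$, $K\in\mathbb{N}$: ${\bm{w}}_{r,0}^m={\bm{w}}_r$, ${\bm{w}}_{r,k+1}^m={\bm{w}}_{r,k}^m-\eta\nabla F_m({\bm{w}}_{r,k}^m)$ ($k=0,\dots,K-1$), ${\bm{w}}_{r+1}=\frac1M\sum_m{\bm{w}}_{r,K}^m$. Define $${\bm{b}}_r=\frac1{MK}\sum_{m=1}^M\sum_{k=0}^{K-1}\big(\nabla F_m({\bm{w}}_{r,k}^m)-\nabla F_m({\bm{w}}_r)\big).$$ If $F({\bm{w}}_r)\le\gamma/(70\eta KM)$, then $\|{\bm{b}}_r\|\le\frac15\|\nabla F({\bm{w}}_r)\|$.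
   Context: Linear separability means there is ${\bm{w}}$ with $\langle{\bm{w}},{\bm{x}}_i^m\rangle>0$ for all $m,i$ (labels absorbed into data). Note ${\bm{w}}_{r+1}-{\bm{w}}_r=-\eta K(\nabla F({\bm{w}}_r)+{\bm{b}}_r)$. *)

theory Defs
  imports "HOL-Analysis.Analysis"
begin

definition grad :: "('a::euclidean_space \<Rightarrow> real) \<Rightarrow> 'a \<Rightarrow> 'a" where
  "grad f w = (THE D. GDERIV f w :> D)"

definition logloss :: "real \<Rightarrow> real" where
  "logloss z = ln (1 + exp (- z))"

definition Floc :: "nat \<Rightarrow> (nat \<Rightarrow> nat \<Rightarrow> 'a::euclidean_space) \<Rightarrow> nat \<Rightarrow> 'a \<Rightarrow> real" where
  "Floc n x m w = (1 / real n) * (\<Sum>i<n. logloss (inner w (x m i)))"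

definition Fglob :: "nat \<Rightarrow> nat \<Rightarrow> (nat \<Rightarrow> nat \<Rightarrow> 'a::euclidean_space) \<Rightarrow> 'a \<Rightarrow> real" where
  "Fglob M n x w = (1 / real M) * (\<Sum>m<M. Floc n x m w)"

definition max_margin :: "nat \<Rightarrow> nat \<Rightarrow> (nat \<Rightarrow> nat \<Rightarrow> 'a::euclidean_space) \<Rightarrow> real" where
  "max_margin M n x =
     (SUP w \<in> {w. norm w = 1}. Min {inner w (x m i) | m i. m < M \<and> i < n})"

text \<open>Local iterates: local_iter n x \<eta> m w k = w^m_{r,k} when started from w = w_r.\<close>
fun local_iter :: "nat \<Rightarrow> (nat \<Rightarrow> nat \<Rightarrow> 'a::euclidean_space) \<Rightarrow> real \<Rightarrow> nat \<Rightarrow> 'a \<Rightarrow> nat \<Rightarrow> 'a" where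
  "local_iter n x \<eta> m w 0 = w"
| "local_iter n x \<eta> m w (Suc k) =
     local_iter n x \<eta> m w k - \<eta> *\<^sub>R grad (Floc n x m) (local_iter n x \<eta> m w k)"

fun localGD :: "nat \<Rightarrow> nat \<Rightarrow> (nat \<Rightarrow> nat \<Rightarrow> 'a::euclidean_space) \<Rightarrow> real \<Rightarrow> nat \<Rightarrow> 'a \<Rightarrow> nat \<Rightarrow> 'a" where
  "localGD M n x \<eta> K w0 0 = w0"
| "localGD M n x \<eta> K w0 (Suc r) =
     (1 / real M) *\<^sub>R (\<Sum>m<M. local_iter n x \<eta> m (localGD M n x \<eta> K w0 r) K)"

definition bias :: "nat \<Rightarrow> nat \<Rightarrow> (nat \<Rightarrow> nat \<Rightarrow> 'a::euclidean_space) \<Rightarrow> real \<Rightarrow> nat \<Rightarrow> 'a \<Rightarrow> 'a" where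
  "bias M n x \<eta> K w =
     (1 / (real M * real K)) *\<^sub>R
       (\<Sum>m<M. \<Sum>k<K. grad (Floc n x m) (local_iter n x \<eta> m w k) - grad (Floc n x m) w)"

end

theory Submission
  imports Defs
begin

definition lp :: "real \<Rightarrow> real" where "lp z = 1 / (1 + exp z)"

lemma lp_pos: "lp z > 0" unfolding lp_def by (simp add: add_pos_pos)

lemma DERIV_logloss: "DERIV logloss z :> - lp z"
proof -
  have "DERIV (\<lambda>z. ln (1 + exp (- z))) z :> (1 / (1 + exp (-z))) * (exp (-z) * (-1))"
    by (auto intro!: derivative_eq_intros simp: add_pos_pos)
  moreover have "(1 / (1 + exp (-z))) * (exp (-z) * (-1)) = - lp z"
    unfolding lp_def by (simp add: field_simps exp_minus add_pos_pos)
  ultimately show ?thesis unfolding logloss_def[abs_def] by simp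
qed

lemma GDERIV_unique: "GDERIV f w :> D1 \<Longrightarrow> GDERIV f w :> D2 \<Longrightarrow> D1 = D2"
proof -
  assume a: "GDERIV f w :> D1" "GDERIV f w :> D2"
  have "(\<lambda>h. inner h D1) = (\<lambda>h. inner h D2)"
    using a unfolding gderiv_def by (rule has_derivative_unique)
  hence "inner (D1 - D2) D1 = inner (D1 - D2) D2" by metis
  hence "inner (D1 - D2) (D1 - D2) = 0" by (simp add: inner_diff_right)
  thus ?thesis by simp
qed

lemma grad_eq: "GDERIV f w :> D \<Longrightarrow> grad f w = D"
  unfolding grad_def using GDERIV_unique by blast

lemma GDERIV_sum: "finite A \<Longrightarrow> (\<And>i. i \<in> A \<Longrightarrow> GDERIV (f i) w :> D i) \<Longrightarrow>
   GDERIV (\<lambda>u. \<Sum>i\<in>A. f i u) w :> (\<Sum>i\<in>A. D i)"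
  unfolding gderiv_def inner_sum_right by (rule has_derivative_sum)

lemma GDERIV_cmult: "GDERIV f w :> D \<Longrightarrow> GDERIV (\<lambda>u. c * f u) w :> c *\<^sub>R D"
  unfolding gderiv_def by (auto intro!: derivative_eq_intros)

lemma GDERIV_Floc: "GDERIV (Floc n x m) u :> (1 / real n) *\<^sub>R (\<Sum>i<n. (- lp (inner u (x m i))) *\<^sub>R x m i)"
proof -
  have "GDERIV (\<lambda>u. logloss (inner u (x m i))) u :> (- lp (inner u (x m i))) *\<^sub>R x m i" for i
  proof (rule GDERIV_DERIV_compose[OF _ DERIV_logloss])
    show "GDERIV (\<lambda>u. inner u (x m i)) u :> x m i"
      unfolding gderiv_def by (rule bounded_linear.has_derivative[OF bounded_linear_inner_left has_derivative_ident])
  qed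
  then show ?thesis unfolding Floc_def[abs_def]
    by (intro GDERIV_cmult GDERIV_sum) auto
qed

lemma grad_Floc: "grad (Floc n x m) u = (1 / real n) *\<^sub>R (\<Sum>i<n. (- lp (inner u (x m i))) *\<^sub>R x m i)"
  by (rule grad_eq[OF GDERIV_Floc])

lemma grad_Fglob: "grad (Fglob M n x) u = (1 / real M) *\<^sub>R (\<Sum>m<M. grad (Floc n x m) u)"
  unfolding grad_Floc
  by (rule grad_eq, unfold Fglob_def[abs_def], intro GDERIV_cmult GDERIV_sum GDERIV_Floc) auto



lemma lp_up: "lp b \<le> exp \<bar>b - a\<bar> * lp a"
proof -
  have "1 + exp a \<le> exp \<bar>b - a\<bar> * (1 + exp b)"
  proof (cases "b \<ge> a")
    case True
    then have "exp a \<le> exp b" by simp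
    moreover have "1 \<le> exp \<bar>b - a\<bar>" by simp
    moreover have "exp b \<le> exp \<bar>b - a\<bar> * exp b" using \<open>1 \<le> exp \<bar>b - a\<bar>\<close> by simp
    moreover have "exp \<bar>b - a\<bar> * (1 + exp b) = exp \<bar>b - a\<bar> + exp \<bar>b - a\<bar> * exp b" by (simp add: algebra_simps)
    ultimately show ?thesis by linarith
  next
    case False
    then have "exp \<bar>b - a\<bar> * exp b = exp a" by (simp add: exp_add[symmetric])
    moreover have "1 \<le> exp \<bar>b - a\<bar>" by simp
    ultimately show ?thesis by (simp add: algebra_simps)
  qed
  then show ?thesis unfolding lp_def by (simp add: field_simps add_pos_pos)
qed

lemma lp_diff: "\<bar>lp b - lp a\<bar> \<le> (exp \<bar>b - a\<bar> - 1) * lp a"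
proof (cases "b \<ge> a")
  case True
  have "lp b \<le> lp a" using True unfolding lp_def by (simp add: frac_le add_pos_pos)
  have "lp a \<le> exp \<bar>b - a\<bar> * lp b" using lp_up[of a b] by (simp add: abs_minus_commute)
  have "exp (- \<bar>b - a\<bar>) * lp a \<le> lp b"
    using \<open>lp a \<le> exp \<bar>b - a\<bar> * lp b\<close> by (simp add: exp_minus field_simps)
  moreover have "1 - exp (- \<bar>b - a\<bar>) \<le> exp \<bar>b - a\<bar> - 1"
  proof -
    have "exp (- \<bar>b - a\<bar>) \<ge> 1 - \<bar>b - a\<bar>" using exp_ge_add_one_self[of "- \<bar>b - a\<bar>"] by simp
    moreover have "exp \<bar>b - a\<bar> \<ge> 1 + \<bar>b - a\<bar>" by (rule exp_ge_add_one_self)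
    ultimately show ?thesis by linarith
  qed
  moreover have "(1 - exp (- \<bar>b - a\<bar>)) * lp a \<le> (exp \<bar>b - a\<bar> - 1) * lp a"
    using calculation(2) lp_pos[of a] by (intro mult_right_mono) auto
  moreover have "(1 - exp (- \<bar>b - a\<bar>)) * lp a = lp a - exp (- \<bar>b - a\<bar>) * lp a" by (simp add: algebra_simps)
  ultimately show ?thesis using \<open>lp b \<le> lp a\<close> by linarith
next
  case False
  have "lp a \<le> lp b" using False unfolding lp_def by (simp add: frac_le add_pos_pos)
  then show ?thesis using lp_up[of b a] by (simp add: algebra_simps)
qed

lemma lp_le_logloss: "lp z \<le> logloss z"
proof -
  have "ln (1 / (1 + exp (-z))) \<le> 1 / (1 + exp (-z)) - 1"
    by (rule ln_le_minus_one) (simp add: add_pos_pos)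
  moreover have "ln (1 / (1 + exp (-z))) = - logloss z"
    unfolding logloss_def by (simp add: ln_div add_pos_pos)
  moreover have "1 / (1 + exp (-z)) - 1 = - lp z"
  proof -
    have h: "1 + exp z \<noteq> 0" by (smt (verit) exp_gt_zero)
    show ?thesis unfolding lp_def exp_minus using h by (simp add: field_simps)
  qed
  ultimately show ?thesis by simp
qed

lemma logloss_pos: "logloss z > 0"
  using lp_le_logloss[of z] lp_pos[of z] by simp



definition gm :: "nat \<Rightarrow> (nat \<Rightarrow> nat \<Rightarrow> 'a::euclidean_space) \<Rightarrow> nat \<Rightarrow> 'a \<Rightarrow> real" where
  "gm n x m u = (1 / real n) * (\<Sum>i<n. lp (inner u (x m i)))"

lemma gm_nonneg: "gm n x m u \<ge> 0"
  unfolding gm_def by (simp add: sum_nonneg less_imp_le[OF lp_pos])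

lemma inner_close:
  assumes "norm (u - w) \<le> d" "norm (a::'a::euclidean_space) \<le> 1"
  shows "\<bar>inner u a - inner w a\<bar> \<le> d"
proof -
  have "\<bar>inner (u - w) a\<bar> \<le> norm (u - w) * norm a" by (rule Cauchy_Schwarz_ineq2)
  also have "\<dots> \<le> norm (u - w)" using assms(2) by (simp add: mult_left_le)
  finally show ?thesis using assms(1) by (simp add: inner_diff_left)
qed

lemma norm_grad_Floc:
  assumes "\<And>i. i < n \<Longrightarrow> norm (x m i) \<le> 1"
  shows "norm (grad (Floc n x m) u) \<le> gm n x m u"
proof -
  have "norm (\<Sum>i<n. (- lp (inner u (x m i))) *\<^sub>R x m i) \<le> (\<Sum>i<n. norm ((- lp (inner u (x m i))) *\<^sub>R x m i))"
    by (rule norm_sum)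
  also have "\<dots> \<le> (\<Sum>i<n. lp (inner u (x m i)))"
  proof (rule sum_mono)
    fix i assume "i \<in> {..<n}"
    then have "norm (x m i) \<le> 1" using assms by auto
    then show "norm ((- lp (inner u (x m i))) *\<^sub>R x m i) \<le> lp (inner u (x m i))"
      using lp_pos[of "inner u (x m i)"] by (simp add: mult_left_le)
  qed
  finally show ?thesis unfolding grad_Floc gm_def by (simp add: divide_simps)
qed

lemma gm_up:
  assumes "\<And>i. i < n \<Longrightarrow> norm (x m i) \<le> 1" "norm (u - w) \<le> d"
  shows "gm n x m u \<le> exp d * gm n x m w"
proof -
  have "(\<Sum>i<n. lp (inner u (x m i))) \<le> (\<Sum>i<n. exp d * lp (inner w (x m i)))"
  proof (rule sum_mono)
    fix i assume "i \<in> {..<n}"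
    then have "\<bar>inner u (x m i) - inner w (x m i)\<bar> \<le> d" using inner_close[OF assms(2)] assms(1) by auto
    then have "exp \<bar>inner u (x m i) - inner w (x m i)\<bar> \<le> exp d" by simp
    then show "lp (inner u (x m i)) \<le> exp d * lp (inner w (x m i))"
      using lp_up[of "inner u (x m i)" "inner w (x m i)"] lp_pos[of "inner w (x m i)"]
      by (meson mult_right_mono less_imp_le order_trans)
  qed
  then show ?thesis unfolding gm_def by (simp add: sum_distrib_left[symmetric] divide_simps)
qed

lemma grad_diff:
  assumes "\<And>i. i < n \<Longrightarrow> norm (x m i) \<le> 1" "norm (u - w) \<le> d"
  shows "norm (grad (Floc n x m) u - grad (Floc n x m) w) \<le> (exp d - 1) * gm n x m w"
proof -
  have eq: "grad (Floc n x m) u - grad (Floc n x m) w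
     = (1 / real n) *\<^sub>R (\<Sum>i<n. (lp (inner w (x m i)) - lp (inner u (x m i))) *\<^sub>R x m i)"
    unfolding grad_Floc by (simp add: scaleR_diff_right[symmetric] sum_subtractf[symmetric] scaleR_diff_left)
  have "norm (\<Sum>i<n. (lp (inner w (x m i)) - lp (inner u (x m i))) *\<^sub>R x m i)
      \<le> (\<Sum>i<n. norm ((lp (inner w (x m i)) - lp (inner u (x m i))) *\<^sub>R x m i))"
    by (rule norm_sum)
  also have "\<dots> \<le> (\<Sum>i<n. (exp d - 1) * lp (inner w (x m i)))"
  proof (rule sum_mono)
    fix i assume "i \<in> {..<n}"
    then have n1: "norm (x m i) \<le> 1" using assms by auto
    then have "\<bar>inner u (x m i) - inner w (x m i)\<bar> \<le> d" using inner_close[OF assms(2) n1] by auto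
    then have "exp \<bar>inner u (x m i) - inner w (x m i)\<bar> - 1 \<le> exp d - 1" by simp
    then have A: "\<bar>lp (inner u (x m i)) - lp (inner w (x m i))\<bar> \<le> (exp d - 1) * lp (inner w (x m i))"
      using lp_diff[of "inner u (x m i)" "inner w (x m i)"] lp_pos[of "inner w (x m i)"]
      by (meson mult_right_mono less_imp_le order_trans)
    have "norm ((lp (inner w (x m i)) - lp (inner u (x m i))) *\<^sub>R x m i)
        = \<bar>lp (inner u (x m i)) - lp (inner w (x m i))\<bar> * norm (x m i)" by (simp add: abs_minus_commute)
    also have "\<dots> \<le> \<bar>lp (inner u (x m i)) - lp (inner w (x m i))\<bar>" using n1 by (simp add: mult_left_le)
    finally show "norm ((lp (inner w (x m i)) - lp (inner u (x m i))) *\<^sub>R x m i) \<le> (exp d - 1) * lp (inner w (x m i))"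
      using A by linarith
  qed
  finally show ?thesis unfolding eq gm_def by (simp add: sum_distrib_left[symmetric] divide_simps)
qed



lemma drift:
  assumes nx: "\<And>i. i < n \<Longrightarrow> norm (x m i) \<le> 1" and eta: "\<eta> > 0" and g1: "\<gamma> \<le> 1"
    and small: "\<eta> * real K * gm n x m w \<le> \<gamma> / 70"
  shows "k \<le> K \<Longrightarrow> norm (local_iter n x \<eta> m w k - w) \<le> 2 * \<eta> * real k * gm n x m w"
proof (induction k)
  case 0
  then show ?case by simp
next
  case (Suc k)
  let ?u = "local_iter n x \<eta> m w k"
  let ?g = "gm n x m w"
  have g0: "?g \<ge> 0" by (rule gm_nonneg)
  have IH: "norm (?u - w) \<le> 2 * \<eta> * real k * ?g" using Suc by simp
  have "2 * \<eta> * real k * ?g \<le> 2 * \<eta> * real K * ?g"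
    using Suc.prems eta g0 by (intro mult_right_mono mult_left_mono) auto
  then have "norm (?u - w) \<le> 1/35" using IH small g1 by linarith
  then have "gm n x m ?u \<le> exp (1/35) * ?g" using gm_up[of n x m] nx by blast
  moreover have "exp (1/35::real) \<le> 2" using real_exp_bound_lemma[of "1/35"] by simp
  moreover have "exp (1/35) * ?g \<le> 2 * ?g" using g0 calculation(2) by (rule mult_right_mono[rotated])
  ultimately have gu: "gm n x m ?u \<le> 2 * ?g" by linarith
  have "norm (local_iter n x \<eta> m w (Suc k) - w) = norm ((?u - w) - \<eta> *\<^sub>R grad (Floc n x m) ?u)"
    by (simp add: algebra_simps)
  also have "\<dots> \<le> norm (?u - w) + \<eta> * norm (grad (Floc n x m) ?u)"
    using eta by (smt (verit) norm_scaleR norm_triangle_ineq4)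
  also have "\<dots> \<le> 2 * \<eta> * real k * ?g + \<eta> * (2 * ?g)"
    using IH norm_grad_Floc[of n x m ?u] nx gu eta by (smt (verit) mult_left_mono)
  finally show ?case by (simp add: algebra_simps)
qed



lemma margin_facts:
  fixes x :: "nat \<Rightarrow> nat \<Rightarrow> 'a::euclidean_space" and w :: 'a
  assumes M1: "M \<ge> 1" and n1: "n \<ge> 1"
    and nx: "\<And>m i. m < M \<Longrightarrow> i < n \<Longrightarrow> norm (x m i) \<le> 1"
  shows "max_margin M n x \<le> 1"
    and "max_margin M n x * ((1 / real M) * (\<Sum>m<M. gm n x m w)) \<le> norm (grad (Fglob M n x) w)"
proof -
  define S where "S v = {inner v (x m i) | m i. m < M \<and> i < n}" for v :: 'a
  have Seq: "S v = (\<lambda>(m,i). inner v (x m i)) ` ({..<M} \<times> {..<n})" for v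
    unfolding S_def by auto
  have fin: "finite (S v)" for v unfolding Seq by simp
  have mem: "m < M \<Longrightarrow> i < n \<Longrightarrow> Min (S v) \<le> inner v (x m i)" for v m i
    using fin by (intro Min_le) (auto simp: S_def)
  obtain b :: 'a where b: "b \<in> Basis" using nonempty_Basis by blast
  have ne: "{v::'a. norm v = 1} \<noteq> {}" using b by (auto intro!: exI[of _ b])
  have mm: "max_margin M n x = (SUP v \<in> {v. norm v = 1}. Min (S v))"
    unfolding max_margin_def S_def by simp
  show "max_margin M n x \<le> 1"
    unfolding mm
  proof (rule cSUP_least[OF ne])
    fix v :: 'a assume "v \<in> {v. norm v = 1}"
    then have "norm v = 1" by simp
    have "Min (S v) \<le> inner v (x 0 0)" using mem M1 n1 by auto
    also have "\<dots> \<le> norm v * norm (x 0 0)" by (rule norm_cauchy_schwarz)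
    also have "\<dots> \<le> 1" using \<open>norm v = 1\<close> nx[of 0 0] M1 n1 by simp
    finally show "Min (S v) \<le> 1" .
  qed
  define G where "G = (1 / real M) * (\<Sum>m<M. gm n x m w)"
  have gmpos: "gm n x m w > 0" for m
  proof -
    have "(\<Sum>i<n. lp (inner w (x m i))) > 0" using n1 lp_pos by (intro sum_pos) (auto simp: lessThan_empty_iff)
    then show ?thesis unfolding gm_def using n1 by simp
  qed
  have Gpos: "G > 0"
  proof -
    have "(\<Sum>m<M. gm n x m w) > 0" using M1 gmpos by (intro sum_pos) (auto simp: lessThan_empty_iff)
    then show ?thesis unfolding G_def using M1 by simp
  qed
  have "max_margin M n x \<le> norm (grad (Fglob M n x) w) / G"
    unfolding mm
  proof (rule cSUP_least[OF ne])
    fix v :: 'a assume "v \<in> {v. norm v = 1}"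
    then have nv: "norm v = 1" by simp
    have per: "Min (S v) * gm n x m w \<le> - inner (grad (Floc n x m) w) v" if "m < M" for m
    proof -
      have "- inner (grad (Floc n x m) w) v = (1 / real n) * (\<Sum>i<n. lp (inner w (x m i)) * inner (x m i) v)"
        unfolding grad_Floc by (simp add: inner_sum_left sum_negf)
      also have "\<dots> \<ge> (1 / real n) * (\<Sum>i<n. lp (inner w (x m i)) * Min (S v))"
        using mem[OF that] lp_pos
        by (intro mult_left_mono sum_mono) (auto simp: inner_commute intro!: mult_left_mono less_imp_le)
      finally show ?thesis unfolding gm_def by (simp add: sum_distrib_left sum_distrib_right algebra_simps)
    qed
    have "Min (S v) * G = (1 / real M) * (\<Sum>m<M. Min (S v) * gm n x m w)"
      unfolding G_def by (simp add: sum_distrib_left algebra_simps)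
    also have "\<dots> \<le> (1 / real M) * (\<Sum>m<M. - inner (grad (Floc n x m) w) v)"
      using per by (intro mult_left_mono sum_mono) auto
    also have "\<dots> = - inner (grad (Fglob M n x) w) v"
      unfolding grad_Fglob by (simp add: inner_sum_left sum_negf)
    also have "\<dots> \<le> norm (grad (Fglob M n x) w)"
      using Cauchy_Schwarz_ineq2[of "grad (Fglob M n x) w" v] nv by simp
    finally show "Min (S v) \<le> norm (grad (Fglob M n x) w) / G"
      using Gpos by (simp add: field_simps)
  qed
  then show "max_margin M n x * G \<le> norm (grad (Fglob M n x) w)"
    using Gpos by (simp add: field_simps)
qed



theorem lemma4p8:
  fixes x :: "nat \<Rightarrow> nat \<Rightarrow> 'a::euclidean_space"
    and M n K r :: nat and \<eta> :: real and w0 :: 'a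
  assumes "M \<ge> 1" and "n \<ge> 1" and "K \<ge> 1"
    and "\<And>m i. m < M \<Longrightarrow> i < n \<Longrightarrow> norm (x m i) \<le> 1"
    and "max_margin M n x > 0"
    and "\<eta> > 0"
    and "Fglob M n x (localGD M n x \<eta> K w0 r)
           \<le> max_margin M n x / (70 * \<eta> * real K * real M)"
  shows "norm (bias M n x \<eta> K (localGD M n x \<eta> K w0 r))
           \<le> (1/5) * norm (grad (Fglob M n x) (localGD M n x \<eta> K w0 r))"
proof -
  note M1 = assms(1) and n1 = assms(2) and K1 = assms(3) and nx = assms(4) and eta = assms(6)
  define w where "w = localGD M n x \<eta> K w0 r"
  define \<gamma> where "\<gamma> = max_margin M n x"
  have gpos: "\<gamma> > 0" using assms(5) unfolding \<gamma>_def .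
  have g1: "\<gamma> \<le> 1" unfolding \<gamma>_def by (rule margin_facts(1)[OF M1 n1 nx])
  have FF: "Fglob M n x w \<le> \<gamma> / (70 * \<eta> * real K * real M)"
    using assms(7) unfolding w_def \<gamma>_def .
  have small: "\<eta> * real K * gm n x m w \<le> \<gamma> / 70" if "m < M" for m
  proof -
    have "gm n x m w \<le> Floc n x m w"
      unfolding gm_def Floc_def using lp_le_logloss n1
      by (intro mult_left_mono sum_mono) auto
    also have "Floc n x m w \<le> (\<Sum>m<M. Floc n x m w)"
      using that by (intro member_le_sum) (auto simp: Floc_def sum_nonneg less_imp_le[OF logloss_pos])
    also have "\<dots> = real M * Fglob M n x w" unfolding Fglob_def using M1 by simp
    finally have "gm n x m w \<le> real M * Fglob M n x w" .
    then have "\<eta> * real K * gm n x m w \<le> \<eta> * real K * (real M * Fglob M n x w)"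
      using eta by (intro mult_left_mono) auto
    also have "\<dots> \<le> \<eta> * real K * real M * (\<gamma> / (70 * \<eta> * real K * real M))"
    proof -
      have "0 \<le> \<eta> * real K * real M" using eta by simp
      from mult_left_mono[OF FF this] show ?thesis by (simp add: algebra_simps)
    qed
    also have "\<dots> = \<gamma> / 70" using eta M1 K1 by (simp add: field_simps)
    finally show ?thesis .
  qed
  have per: "norm (grad (Floc n x m) (local_iter n x \<eta> m w k) - grad (Floc n x m) w) \<le> (2 * \<gamma> / 35) * gm n x m w"
    if "m < M" "k < K" for m k
  proof -
    have nxm: "\<And>i. i < n \<Longrightarrow> norm (x m i) \<le> 1" using nx that(1) by auto
    have "norm (local_iter n x \<eta> m w k - w) \<le> 2 * \<eta> * real k * gm n x m w"
      using drift[of n x m, OF nxm eta g1 small[OF that(1)]] that(2) by simp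
    also have "\<dots> \<le> 2 * \<eta> * real K * gm n x m w"
      using that(2) eta gm_nonneg[of n x m w] by (intro mult_right_mono mult_left_mono) auto
    also have "\<dots> \<le> \<gamma> / 35" using small[OF that(1)] by linarith
    finally have d: "norm (local_iter n x \<eta> m w k - w) \<le> \<gamma> / 35" .
    have "norm (grad (Floc n x m) (local_iter n x \<eta> m w k) - grad (Floc n x m) w) \<le> (exp (\<gamma> / 35) - 1) * gm n x m w"
      using grad_diff[of n x m, OF nxm d] .
    also have "\<dots> \<le> (2 * \<gamma> / 35) * gm n x m w"
      using real_exp_bound_lemma[of "\<gamma> / 35"] gpos g1 gm_nonneg[of n x m w]
      by (intro mult_right_mono) auto
    finally show ?thesis .
  qed
  define G where "G = (1 / real M) * (\<Sum>m<M. gm n x m w)"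
  have "norm (bias M n x \<eta> K w) = (1 / (real M * real K)) *
     norm (\<Sum>m<M. \<Sum>k<K. grad (Floc n x m) (local_iter n x \<eta> m w k) - grad (Floc n x m) w)"
    unfolding bias_def by simp
  also have "\<dots> \<le> (1 / (real M * real K)) * (\<Sum>m<M. \<Sum>k<K. (2 * \<gamma> / 35) * gm n x m w)"
  proof (intro mult_left_mono)
    show "norm (\<Sum>m<M. \<Sum>k<K. grad (Floc n x m) (local_iter n x \<eta> m w k) - grad (Floc n x m) w)
        \<le> (\<Sum>m<M. \<Sum>k<K. (2 * \<gamma> / 35) * gm n x m w)"
      using per by (intro order_trans[OF norm_sum] sum_mono order_trans[OF norm_sum]) auto
  qed auto
  also have "\<dots> = (2 * \<gamma> / 35) * G"
  proof -
    have "(\<Sum>m<M. \<Sum>k<K. (2 * \<gamma> / 35) * gm n x m w) = (real K * (2 * \<gamma> / 35)) * (\<Sum>m<M. gm n x m w)"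
      by (simp add: sum_distrib_left mult.assoc)
    then show ?thesis unfolding G_def using K1 M1 by (simp add: field_simps)
  qed
  also have "\<dots> \<le> (2 / 35) * norm (grad (Fglob M n x) w)"
    using margin_facts(2)[where x=x and w=w and M=M and n=n, OF M1 n1 nx] unfolding G_def \<gamma>_def by simp
  also have "\<dots> \<le> (1/5) * norm (grad (Fglob M n x) w)" by simp
  finally show ?thesis unfolding w_def .
qed


end
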